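(* Define $g:\mathbb N\to\mathbb N$ by $$g(n)=\begin{cases}\lfloor\varphi n\rfloor, & n\in R_{2,0},\\ \lfloor\varphi n-2\rfloor, & n\in R_{1,0},\\ \lfloor(\varphi-1) n+2\rfloor, & n\in R_{2,2},\\ \lfloor(\varphi-1) n+1\rfloor, & n\in R_{3,1}.\end{cases}$$ Then $g$ is an $R_{i,j}$-permutation of $\mathbb N$ of order $2$ (a bijection of $\mathbb N$ with $g\circ g=\mathrm{id}\neq g$). Its first values are $2,1,4,3,6,5,9,12,7,14,\dots$.
   Context: $\mathbb N=\{1,2,\dots\}$, $\varphi=\frac{1+\sqrt5}{2}$, $F$ the Fibonacci numbers ($F(0)=0,F(1)=F(2)=1$). For $i\in\mathbb Z^{\ge0},j\in\mathbb Z$, $R_{i,j}$ is the range of $n\mapsto F(i+1)\lfloor n\varphi\rfloor+F(i)n-j$, $n\in\mathbb N$. An $R_{i,j}$-permutation is a permutation $\pi$ of $\mathbb N$ defined piecewise on a finite partition of $\mathbb N$ into sets $R_{i,j}$, with $\pi(n)=\lfloor(a\varphi+b)n+c\rfloor$ on each piece for integers $a,b,c$ depending on the piece. *)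

theory Defs
  imports Complex_Main "HOL-Number_Theory.Fib"
begin

definition phi :: real where "phi = (1 + sqrt 5) / 2"

definition Npos :: "int set" where "Npos = {n. n \<ge> 1}"

definition R :: "nat \<Rightarrow> int \<Rightarrow> int set" where
  "R i j = {int (fib (i+1)) * \<lfloor>real_of_int n * phi\<rfloor> + int (fib i) * n - j | n. n \<ge> 1}"

definition piece_set :: "nat \<times> int \<times> int \<times> int \<times> int \<Rightarrow> int set" where
  "piece_set p = (case p of (i,j,a,b,c) \<Rightarrow> R i j)"

definition piece_fun :: "nat \<times> int \<times> int \<times> int \<times> int \<Rightarrow> int \<Rightarrow> int" where
  "piece_fun p n = (case p of (i,j,a,b,c) \<Rightarrow>
       \<lfloor>(of_int a * phi + of_int b) * of_int n + of_int c\<rfloor>)"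

definition R_permutation :: "(int \<Rightarrow> int) \<Rightarrow> bool" where
  "R_permutation \<pi> \<longleftrightarrow> bij_betw \<pi> Npos Npos \<and>
     (\<exists>ps :: (nat \<times> int \<times> int \<times> int \<times> int) list.
        (\<forall>k l. k < length ps \<and> l < length ps \<and> k \<noteq> l \<longrightarrow>
               piece_set (ps ! k) \<inter> piece_set (ps ! l) = {}) \<and>
        (\<Union>p\<in>set ps. piece_set p) = Npos \<and>
        (\<forall>p\<in>set ps. \<forall>n\<in>piece_set p. \<pi> n = piece_fun p n))"

text \<open>The function \<open>g\<close> of the theorem (values outside \<open>\<nat>\<close> are irrelevant).\<close>
definition g :: "int \<Rightarrow> int" where
  "g n = (if n \<in> R 2 0 then \<lfloor>phi * of_int n\<rfloor>
          else if n \<in> R 1 0 then \<lfloor>phi * of_int n - 2\<rfloor>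
          else if n \<in> R 2 2 then \<lfloor>(phi - 1) * of_int n + 2\<rfloor>
          else if n \<in> R 3 1 then \<lfloor>(phi - 1) * of_int n + 1\<rfloor>
          else n)"

end

theory Submission
  imports Defs "HOL-Computational_Algebra.Primes"
begin

lemma no_sq5: "(x::int)^2 = 5 * y^2 \<Longrightarrow> y = 0"
proof (induction "nat \<bar>y\<bar>" arbitrary: x y rule: less_induct)
  case less
  show ?case
  proof (rule ccontr)
    assume y0: "y \<noteq> 0"
    have p: "prime (5::int)" by simp
    have "5 dvd x^2" using less.prems by simp
    then have "5 dvd x" using p prime_dvd_power by blast
    then obtain u where u: "x = 5*u" by blast
    then have "5 * u^2 = y^2" using less.prems by (simp add: power2_eq_square)
    then have "5 dvd y^2" by (metis dvd_triv_left)
    then have "5 dvd y" using p prime_dvd_power by blast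
    then obtain v where v: "y = 5*v" by blast
    have "u^2 = 5 * v^2" using \<open>5 * u^2 = y^2\<close> v by (simp add: power2_eq_square)
    moreover have "nat \<bar>v\<bar> < nat \<bar>y\<bar>" using v y0 by auto
    ultimately have "v = 0" using less.hyps by blast
    then show False using v y0 by simp
  qed
qed

lemma phi_sq: "phi^2 = phi + 1"
  by (simp add: phi_def field_simps power2_eq_square)

lemma phi_bounds: "1.618 < phi" "phi < 1.6181"
proof -
  have "2.236 < sqrt 5" by (rule real_less_rsqrt) (simp add: power2_eq_square)
  moreover have "sqrt 5 < 2.2362" by (rule real_less_lsqrt) (auto simp: power2_eq_square)
  ultimately show "1.618 < phi" "phi < 1.6181" by (auto simp: phi_def)
qed

lemma phi_12: "1 < phi" "phi < 2" using phi_bounds by simp_all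

lemma phi_irr: assumes "n \<noteq> 0" shows "real_of_int n * phi \<noteq> real_of_int k"
proof
  assume h: "real_of_int n * phi = real_of_int k"
  have "real_of_int n * sqrt 5 = real_of_int (2*k - n)" using h by (simp add: phi_def field_simps)
  then have "(real_of_int n * sqrt 5)^2 = real_of_int ((2*k-n)^2)" by simp
  then have "real_of_int (5 * n^2) = real_of_int ((2*k-n)^2)" by (simp add: power_mult_distrib)
  then have "(2*k-n)^2 = 5 * n^2" by linarith
  then show False using no_sq5 assms by blast
qed


definition wa :: "int \<Rightarrow> int" where "wa n = \<lfloor>real_of_int n * phi\<rfloor>"
definition wb :: "int \<Rightarrow> int" where "wb n = wa n + n"

lemma wa_frac: assumes "n \<noteq> 0"
  shows "real_of_int (wa n) < real_of_int n * phi" "real_of_int n * phi < real_of_int (wa n) + 1"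
proof -
  have "real_of_int (wa n) \<le> real_of_int n * phi" unfolding wa_def by simp
  moreover have "real_of_int (wa n) \<noteq> real_of_int n * phi" using phi_irr[OF assms, of "wa n"] by simp
  ultimately show "real_of_int (wa n) < real_of_int n * phi" by simp
  show "real_of_int n * phi < real_of_int (wa n) + 1" unfolding wa_def by linarith
qed

lemma wa_pos: assumes "n \<ge> 1" shows "wa n \<ge> 1"
proof -
  have "real_of_int n * phi \<ge> 1 * phi" using assms phi_bounds by (intro mult_right_mono) auto
  then have "real_of_int n * phi \<ge> 1" using phi_12 by linarith
  then show ?thesis unfolding wa_def by (simp add: le_floor_iff)
qed

lemma wa_mono: assumes "m < n" shows "wa m < wa n"
proof -
  have "real_of_int n * phi - real_of_int m * phi = real_of_int (n - m) * phi" by (simp add: algebra_simps)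
  also have "\<dots> \<ge> 1 * phi" using assms phi_bounds by (intro mult_right_mono) auto
  finally have "real_of_int n * phi \<ge> real_of_int m * phi + 1" using phi_bounds by simp
  then have "\<lfloor>real_of_int m * phi + 1\<rfloor> \<le> \<lfloor>real_of_int n * phi\<rfloor>" by (rule floor_mono)
  then show ?thesis unfolding wa_def by simp
qed

lemma wa_inj: "wa m = wa n \<Longrightarrow> m = n"
  by (metis linorder_neqE wa_mono less_irrefl)

lemma I1: assumes "n \<ge> 1" shows "wa (wa n) = wa n + n - 1"
proof -
  define a where "a = real_of_int (wa n)"
  define t where "t = real_of_int n * phi"
  define f where "f = t - a"
  have f: "0 < f" "f < 1" using wa_frac[of n] assms unfolding f_def a_def t_def by auto
  have pp: "phi * phi = phi + 1" using phi_sq by (simp add: power2_eq_square)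
  have "t * phi = t + real_of_int n" unfolding t_def mult.assoc pp by (simp add: algebra_simps)
  then have e: "a * phi = a + real_of_int n - f * (phi - 1)" unfolding f_def by (simp add: algebra_simps)
  have "0 < f * (phi - 1)" using f phi_bounds by simp
  moreover have "f * (phi - 1) < 1 * 1" using f phi_bounds by (intro mult_strict_mono) auto
  ultimately have "a + real_of_int n - 1 \<le> a * phi \<and> a * phi < a + real_of_int n" using e by linarith
  then have "\<lfloor>a * phi\<rfloor> = wa n + n - 1" unfolding a_def by (simp add: floor_eq_iff)
  then show ?thesis unfolding a_def wa_def[of "wa n"] by simp
qed

lemma I2: assumes "n \<ge> 1" shows "wa (wb n) = 2 * wa n + n"
proof -
  define a where "a = real_of_int (wa n)"
  define t where "t = real_of_int n * phi"
  define f where "f = t - a"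
  have f: "0 < f" "f < 1" using wa_frac[of n] assms unfolding f_def a_def t_def by auto
  have pp: "phi * phi = phi + 1" using phi_sq by (simp add: power2_eq_square)
  have "t * phi = t + real_of_int n" unfolding t_def mult.assoc pp by (simp add: algebra_simps)
  then have e: "(a + real_of_int n) * phi = 2 * a + real_of_int n + f * (2 - phi)"
    unfolding f_def t_def by (simp add: algebra_simps)
  have "0 < f * (2 - phi)" using f phi_bounds by simp
  moreover have "f * (2 - phi) < 1 * 1" using f phi_bounds by (intro mult_strict_mono) auto
  ultimately have "2 * a + real_of_int n \<le> (a + real_of_int n) * phi \<and> (a + real_of_int n) * phi < 2 * a + real_of_int n + 1" using e by linarith
  then have "\<lfloor>(a + real_of_int n) * phi\<rfloor> = 2 * wa n + n" unfolding a_def by (simp add: floor_eq_iff)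
  then show ?thesis unfolding a_def wb_def by (simp add: wa_def[of "wa n + n"])
qed

lemma I3: assumes "n \<ge> 1" shows "wa (wa (wa n)) = 2 * wa n + n - 2"
  using I1[OF assms] I1[OF wa_pos[OF assms]] by simp

lemma I4: assumes "n \<ge> 1" shows "wa (wa (wb n)) = 3 * wa n + 2 * n - 1"
proof -
  have "wb n \<ge> 1" using wa_pos[OF assms] assms unfolding wb_def by simp
  then show ?thesis using I1[of "wb n"] I2[OF assms] unfolding wb_def by simp
qed

lemma beatty_disj: assumes "m \<ge> 1" "n \<ge> 1" shows "wa m \<noteq> wb n"
proof
  assume h: "wa m = wb n"
  define k where "k = real_of_int (wa m)"
  have m1: "k < real_of_int m * phi" "real_of_int m * phi < k + 1" using wa_frac[of m] assms unfolding k_def by auto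
  have n1: "k < real_of_int n * phi + n" "real_of_int n * phi + n < k + 1"
    using wa_frac[of n] assms h unfolding k_def wb_def by auto
  have p1: "phi * (phi - 1) = 1" using phi_sq by (simp add: power2_eq_square algebra_simps)
  have p2: "(phi + 1) * (2 - phi) = 1" using phi_sq by (simp add: power2_eq_square algebra_simps)
  have "k * (phi - 1) < real_of_int m * phi * (phi - 1)" using m1 phi_bounds by (intro mult_strict_right_mono) auto
  then have a1: "k * (phi - 1) < real_of_int m" using p1 by (simp add: mult.assoc)
  have "real_of_int m * phi * (phi - 1) < (k+1) * (phi - 1)" using m1 phi_bounds by (intro mult_strict_right_mono) auto
  then have a2: "real_of_int m < (k + 1) * (phi - 1)" using p1 by (simp add: mult.assoc)
  have "k * (2 - phi) < real_of_int n * (phi + 1) * (2 - phi)" using n1 phi_bounds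
    by (intro mult_strict_right_mono) (auto simp: algebra_simps)
  then have b1: "k * (2 - phi) < real_of_int n" using p2 by (simp add: mult.assoc)
  have "real_of_int n * (phi + 1) * (2 - phi) < (k + 1) * (2 - phi)" using n1 phi_bounds
    by (intro mult_strict_right_mono) (auto simp: algebra_simps)
  then have b2: "real_of_int n < (k + 1) * (2 - phi)" using p2 by (simp add: mult.assoc)
  have "k < real_of_int (m + n)" "real_of_int (m + n) < k + 1" using a1 a2 b1 b2 by (simp_all add: algebra_simps)
  then have "wa m < m + n \<and> m + n < wa m + 1" unfolding k_def by (metis of_int_less_iff of_int_1 of_int_add)
  then show False by linarith
qed

lemma beatty_cover: assumes "k \<ge> 1" shows "(\<exists>m\<ge>1. wa m = k) \<or> (\<exists>n\<ge>1. wb n = k)"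
proof (rule ccontr)
  assume nc: "\<not> ?thesis"
  define x where "x = real_of_int k * (phi - 1)"
  define y where "y = real_of_int k * (2 - phi)"
  have xy: "x + y = real_of_int k" unfolding x_def y_def by (simp add: algebra_simps)
  have xni: "x \<noteq> real_of_int \<lfloor>x\<rfloor>"
  proof
    assume "x = real_of_int \<lfloor>x\<rfloor>"
    then have "real_of_int k * phi = real_of_int (\<lfloor>x\<rfloor> + k)" unfolding x_def by (simp add: algebra_simps)
    then show False using phi_irr[of k "\<lfloor>x\<rfloor> + k"] assms by simp
  qed
  have fl: "\<lfloor>x\<rfloor> + \<lfloor>y\<rfloor> = k - 1"
  proof -
    have "y = real_of_int k - x" using xy by simp
    have "real_of_int \<lfloor>x\<rfloor> < x" using xni by (metis of_int_floor_le order_le_less)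
    then have "\<lfloor>y\<rfloor> = k - 1 - \<lfloor>x\<rfloor>" using \<open>y = real_of_int k - x\<close> by (simp add: floor_eq_iff) linarith
    then show ?thesis by simp
  qed
  define m where "m = \<lfloor>x\<rfloor> + 1"
  define n where "n = \<lfloor>y\<rfloor> + 1"
  have "x > 0" unfolding x_def using assms phi_bounds by simp
  have "y > 0" unfolding y_def using assms phi_bounds by simp
  have m1: "m \<ge> 1" unfolding m_def using \<open>x > 0\<close> by simp
  have n1: "n \<ge> 1" unfolding n_def using \<open>y > 0\<close> by simp
  have mn: "m + n = k + 1" unfolding m_def n_def using fl by simp
  have p1: "phi * (phi - 1) = 1" using phi_sq by (simp add: power2_eq_square algebra_simps)
  have p2: "(phi + 1) * (2 - phi) = 1" using phi_sq by (simp add: power2_eq_square algebra_simps)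
  have mx: "x < real_of_int m" unfolding m_def by linarith
  have ny: "y < real_of_int n" unfolding n_def by linarith
  have "x * phi < real_of_int m * phi" using mx phi_bounds by (intro mult_strict_right_mono) auto
  moreover have "x * phi = real_of_int k * (phi * (phi - 1))" unfolding x_def by (simp add: mult_ac)
  ultimately have c1: "real_of_int k < real_of_int m * phi" using p1 by simp
  have "y * (phi + 1) = real_of_int k * ((phi + 1) * (2 - phi))" unfolding y_def by (simp add: mult_ac)
  also have "\<dots> = real_of_int k" using p2 by simp
  finally have yk: "y * (phi + 1) = real_of_int k" .
  have "y * (phi + 1) < real_of_int n * (phi + 1)" using ny phi_bounds by (intro mult_strict_right_mono) auto
  moreover have "real_of_int n * (phi + 1) = real_of_int n * phi + real_of_int n" by (simp add: algebra_simps)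
  ultimately have c2: "real_of_int k < real_of_int n * phi + real_of_int n" using yk by linarith
  have d1: "real_of_int m * phi \<ge> real_of_int k + 1"
  proof (rule ccontr)
    assume "\<not> ?thesis"
    then have "wa m = k" unfolding wa_def using c1 by (simp add: floor_eq_iff)
    then show False using nc m1 by blast
  qed
  have d2: "real_of_int n * phi + real_of_int n \<ge> real_of_int k + 1"
  proof (rule ccontr)
    assume "\<not> ?thesis"
    then have "\<lfloor>real_of_int n * phi\<rfloor> = k - n" using c2 by (simp add: floor_eq_iff)
    then have "wb n = k" unfolding wb_def wa_def by simp
    then show False using nc n1 by blast
  qed
  have "real_of_int m * phi \<noteq> real_of_int (k + 1)" using phi_irr[of m "k+1"] m1 by simp
  then have d1': "real_of_int m * phi > real_of_int k + 1" using d1 by simp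
  have "(real_of_int k + 1) * (phi - 1) < real_of_int m * phi * (phi - 1)" using d1' phi_bounds
    by (intro mult_strict_right_mono) auto
  then have e1: "(real_of_int k + 1) * (phi - 1) < real_of_int m" using p1 by (simp add: mult.assoc)
  have "(real_of_int k + 1) * (2 - phi) \<le> real_of_int n * (phi + 1) * (2 - phi)" using d2 phi_bounds
    by (intro mult_right_mono) (auto simp: algebra_simps)
  then have e2: "(real_of_int k + 1) * (2 - phi) \<le> real_of_int n" using p2 by (simp add: mult.assoc)
  have "real_of_int k + 1 < real_of_int (m + n)" using e1 e2 by (simp add: algebra_simps)
  then show False using mn by simp
qed


lemma fibs: "fib 1 = 1" "fib 2 = 1" "fib 3 = 2" "fib 4 = 3"
  by (simp_all add: numeral_eq_Suc)

lemma wb_pos: "n \<ge> 1 \<Longrightarrow> wb n \<ge> 1" using wa_pos unfolding wb_def by force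

lemma R10: "R 1 0 = {x. \<exists>n\<ge>1. x = wb n}"
  unfolding R_def wb_def wa_def using fibs by (auto simp: add.commute)
lemma R20: "R 2 0 = {x. \<exists>n\<ge>1. x = 2 * wa n + n}"
  unfolding R_def wa_def using fibs by auto
lemma R22: "R 2 2 = {x. \<exists>n\<ge>1. x = 2 * wa n + n - 2}"
  unfolding R_def wa_def using fibs by auto
lemma R31: "R 3 1 = {x. \<exists>n\<ge>1. x = 3 * wa n + 2 * n - 1}"
  unfolding R_def wa_def using fibs by auto

lemma R20': "R 2 0 = {x. \<exists>n\<ge>1. x = wa (wb n)}"
  unfolding R20 using I2 by auto
lemma R22': "R 2 2 = {x. \<exists>n\<ge>1. x = wa (wa (wa n))}"
  unfolding R22 using I3 by auto
lemma R31': "R 3 1 = {x. \<exists>n\<ge>1. x = wa (wa (wb n))}"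
  unfolding R31 using I4 by auto

lemma classify: assumes "x \<ge> 1"
  shows "x \<in> R 1 0 \<or> x \<in> R 2 0 \<or> x \<in> R 2 2 \<or> x \<in> R 3 1"
proof -
  from beatty_cover[OF assms] show ?thesis
  proof
    assume "\<exists>m\<ge>1. wa m = x"
    then obtain y where y: "y \<ge> 1" "x = wa y" by auto
    from beatty_cover[OF y(1)] show ?thesis
    proof
      assume "\<exists>m\<ge>1. wa m = y"
      then obtain z where z: "z \<ge> 1" "y = wa z" by auto
      from beatty_cover[OF z(1)] show ?thesis
      proof
        assume "\<exists>m\<ge>1. wa m = z"
        then show ?thesis using y z unfolding R22' by auto
      next
        assume "\<exists>m\<ge>1. wb m = z"
        then show ?thesis using y z unfolding R31' by auto
      qed
    next
      assume "\<exists>m\<ge>1. wb m = y"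
      then show ?thesis using y unfolding R20' by auto
    qed
  next
    assume "\<exists>m\<ge>1. wb m = x"
    then show ?thesis unfolding R10 by auto
  qed
qed

lemma disj1: "R 2 0 \<inter> R 1 0 = {}"
  unfolding R20' R10 using beatty_disj wb_pos by fastforce
lemma disj2: "R 2 0 \<inter> R 2 2 = {}"
  unfolding R20' R22' using beatty_disj wb_pos wa_pos wa_inj by (smt (verit) disjoint_iff mem_Collect_eq)
lemma disj3: "R 2 0 \<inter> R 3 1 = {}"
  unfolding R20' R31' using beatty_disj wb_pos wa_pos wa_inj by (smt (verit) disjoint_iff mem_Collect_eq)
lemma disj4: "R 1 0 \<inter> R 2 2 = {}"
  unfolding R10 R22' using beatty_disj wb_pos wa_pos by (smt (verit) disjoint_iff mem_Collect_eq)
lemma disj5: "R 1 0 \<inter> R 3 1 = {}"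
  unfolding R10 R31' using beatty_disj wb_pos wa_pos by (smt (verit) disjoint_iff mem_Collect_eq)
lemma disj6: "R 2 2 \<inter> R 3 1 = {}"
  unfolding R22' R31' using beatty_disj wb_pos wa_pos wa_inj by (smt (verit) disjoint_iff mem_Collect_eq)

lemma L: assumes "m \<ge> 1" shows "\<lfloor>(phi - 1) * real_of_int (wa m) + real_of_int c\<rfloor> = m - 1 + c"
proof -
  have "(phi - 1) * real_of_int (wa m) + real_of_int c = real_of_int (wa m) * phi + real_of_int (c - wa m)"
    by (simp add: algebra_simps)
  then have "\<lfloor>(phi - 1) * real_of_int (wa m) + real_of_int c\<rfloor> = wa (wa m) + (c - wa m)"
    by (simp add: wa_def[of "wa m"])
  then show ?thesis using I1[OF assms] by simp
qed

lemma G1: assumes "n \<ge> 1" shows "g (wa n + n) = 2 * wa n + n - 2"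
proof -
  have m: "wb n \<in> R 1 0" using assms unfolding R10 by auto
  then have "wb n \<notin> R 2 0" using disj1 by auto
  then have "g (wb n) = \<lfloor>phi * real_of_int (wb n) - 2\<rfloor>" using m unfolding g_def by simp
  also have "\<dots> = wa (wb n) - 2" unfolding wa_def[of "wb n"] by (simp add: mult.commute)
  finally show ?thesis using I2[OF assms] unfolding wb_def by simp
qed

lemma G2: assumes "n \<ge> 1" shows "g (2 * wa n + n) = 3 * wa n + 2 * n - 1"
proof -
  have m: "wa (wb n) \<in> R 2 0" using assms unfolding R20' by auto
  then have "g (wa (wb n)) = \<lfloor>phi * real_of_int (wa (wb n))\<rfloor>" unfolding g_def by simp
  also have "\<dots> = wa (wa (wb n))" unfolding wa_def[of "wa (wb n)"] by (simp add: mult.commute)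
  finally show ?thesis using I2[OF assms] I4[OF assms] by simp
qed

lemma G3: assumes "n \<ge> 1" shows "g (2 * wa n + n - 2) = wa n + n"
proof -
  have m: "wa (wa (wa n)) \<in> R 2 2" using assms unfolding R22' by auto
  then have "wa (wa (wa n)) \<notin> R 2 0" "wa (wa (wa n)) \<notin> R 1 0" using disj2 disj4 by auto
  then have "g (wa (wa (wa n))) = \<lfloor>(phi - 1) * real_of_int (wa (wa (wa n))) + 2\<rfloor>"
    using m unfolding g_def by simp
  also have "\<dots> = wa (wa n) - 1 + 2" using L[of "wa (wa n)" 2] wa_pos assms by simp
  finally show ?thesis using I1[OF assms] I3[OF assms] by simp
qed

lemma G4: assumes "n \<ge> 1" shows "g (3 * wa n + 2 * n - 1) = 2 * wa n + n"
proof -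
  have m: "wa (wa (wb n)) \<in> R 3 1" using assms unfolding R31' by auto
  then have "wa (wa (wb n)) \<notin> R 2 0" "wa (wa (wb n)) \<notin> R 1 0" "wa (wa (wb n)) \<notin> R 2 2"
    using disj3 disj5 disj6 by auto
  then have "g (wa (wa (wb n))) = \<lfloor>(phi - 1) * real_of_int (wa (wa (wb n))) + 1\<rfloor>"
    using m unfolding g_def by simp
  also have "\<dots> = wa (wb n) - 1 + 1" using L[of "wa (wb n)" 1] wa_pos wb_pos assms by simp
  finally show ?thesis using I2[OF assms] I4[OF assms] by simp
qed


lemma invol: assumes "x \<in> Npos" shows "g (g x) = x \<and> g x \<in> Npos"
proof -
  have x: "x \<ge> 1" using assms unfolding Npos_def by simp
  from classify[OF x] show ?thesis
  proof (elim disjE)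
    assume "x \<in> R 1 0"
    then obtain n where n: "n \<ge> 1" "x = wa n + n" unfolding R10 wb_def by auto
    then show ?thesis using G1 G3 wa_pos[OF n(1)] unfolding Npos_def by simp
  next
    assume "x \<in> R 2 0"
    then obtain n where n: "n \<ge> 1" "x = 2 * wa n + n" unfolding R20 by auto
    then show ?thesis using G2 G4 wa_pos[OF n(1)] unfolding Npos_def by simp
  next
    assume "x \<in> R 2 2"
    then obtain n where n: "n \<ge> 1" "x = 2 * wa n + n - 2" unfolding R22 by auto
    then show ?thesis using G1 G3 wa_pos[OF n(1)] unfolding Npos_def by simp
  next
    assume "x \<in> R 3 1"
    then obtain n where n: "n \<ge> 1" "x = 3 * wa n + 2 * n - 1" unfolding R31 by auto
    then show ?thesis using G2 G4 wa_pos[OF n(1)] unfolding Npos_def by simp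
  qed
qed

lemma union: "R 2 0 \<union> R 1 0 \<union> R 2 2 \<union> R 3 1 = Npos"
proof
  show "R 2 0 \<union> R 1 0 \<union> R 2 2 \<union> R 3 1 \<subseteq> Npos"
    unfolding R10 R20 R22 R31 Npos_def wb_def using wa_pos by force
  show "Npos \<subseteq> R 2 0 \<union> R 1 0 \<union> R 2 2 \<union> R 3 1"
    using classify unfolding Npos_def by blast
qed

lemma wa_vals: "wa 1 = 1" "wa 2 = 3" "wa 3 = 4" "wa 4 = 6"
  unfolding wa_def using phi_bounds by (simp_all add: floor_eq_iff)

lemma vals: "map g [1..10] = [2,1,4,3,6,5,9,12,7,14]"
proof -
  have "g 1 = 2" using G3[of 1] wa_vals by simp
  moreover have "g 2 = 1" using G1[of 1] wa_vals by simp
  moreover have "g 3 = 4" using G2[of 1] wa_vals by simp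
  moreover have "g 4 = 3" using G4[of 1] wa_vals by simp
  moreover have "g 5 = 6" using G1[of 2] wa_vals by simp
  moreover have "g 6 = 5" using G3[of 2] wa_vals by simp
  moreover have "g 7 = 9" using G1[of 3] wa_vals by simp
  moreover have "g 8 = 12" using G2[of 2] wa_vals by simp
  moreover have "g 9 = 7" using G3[of 3] wa_vals by simp
  moreover have "g 10 = 14" using G1[of 4] wa_vals by simp
  moreover have "[1..10::int] = [1,2,3,4,5,6,7,8,9,10]" by (simp add: upto.simps)
  ultimately show ?thesis by simp
qed

lemma Rperm: "R_permutation g"
proof -
  have bij: "bij_betw g Npos Npos"
    by (rule bij_betw_byWitness[where f'=g]) (use invol in auto)
  define ps :: "(nat \<times> int \<times> int \<times> int \<times> int) list" where
    "ps = [(2,0,1,0,0),(1,0,1,0,-2),(2,2,1,-1,2),(3,1,1,-1,1)]"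
  have D: "piece_set (ps ! k) \<inter> piece_set (ps ! l) = {}" if "k < length ps" "l < length ps" "k \<noteq> l" for k l
  proof -
    have "k < 4" "l < 4" using that by (simp_all add: ps_def)
    then have "k \<in> {0,1,2,3}" "l \<in> {0,1,2,3}" by auto
    then show ?thesis using that(3) disj1 disj2 disj3 disj4 disj5 disj6
      by (auto simp: ps_def piece_set_def Int_commute)
  qed
  have U: "(\<Union>p\<in>set ps. piece_set p) = Npos"
    using union by (auto simp: ps_def piece_set_def)
  have F: "\<forall>p\<in>set ps. \<forall>n\<in>piece_set p. g n = piece_fun p n"
  proof -
    have "g n = \<lfloor>phi * real_of_int n\<rfloor>" if "n \<in> R 2 0" for n using that unfolding g_def by simp
    moreover have "g n = \<lfloor>phi * real_of_int n - 2\<rfloor>" if "n \<in> R 1 0" for n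
      using that disj1 unfolding g_def by auto
    moreover have "g n = \<lfloor>(phi - 1) * real_of_int n + 2\<rfloor>" if "n \<in> R 2 2" for n
      using that disj2 disj4 unfolding g_def by auto
    moreover have "g n = \<lfloor>(phi - 1) * real_of_int n + 1\<rfloor>" if "n \<in> R 3 1" for n
      using that disj3 disj5 disj6 unfolding g_def by auto
    ultimately show ?thesis by (auto simp: ps_def piece_set_def piece_fun_def mult.commute)
  qed
  show ?thesis unfolding R_permutation_def using bij D U F by blast
qed

theorem theorem4p2:
  shows "R 2 0 \<union> R 1 0 \<union> R 2 2 \<union> R 3 1 = Npos
    \<and> R 2 0 \<inter> R 1 0 = {} \<and> R 2 0 \<inter> R 2 2 = {} \<and> R 2 0 \<inter> R 3 1 = {}
    \<and> R 1 0 \<inter> R 2 2 = {} \<and> R 1 0 \<inter> R 3 1 = {} \<and> R 2 2 \<inter> R 3 1 = {}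
    \<and> R_permutation g
    \<and> (\<forall>n\<in>Npos. g (g n) = n)
    \<and> (\<exists>n\<in>Npos. g n \<noteq> n)
    \<and> map g [1..10] = [2,1,4,3,6,5,9,12,7,14]"
proof -
  have "g 1 = 2" using G3[of 1] wa_vals by simp
  then have "\<exists>n\<in>Npos. g n \<noteq> n" by (intro bexI[of _ 1]) (auto simp: Npos_def)
  then show ?thesis using union disj1 disj2 disj3 disj4 disj5 disj6 Rperm invol vals by blast
qed

end
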